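(* Let $g$, $h$, $(\delta_\varepsilon)_\varepsilon$ be as below and let $(x_\varepsilon)_\varepsilon\in C^\infty(\mathbb{R}^n\times\mathbb{R}^n\times\mathbb{R},\mathbb{R}^n)^{(0,1]}$ be an asymptotic solution of the initial value problem $(\ast)$. Then $(x_\varepsilon)_\varepsilon$ is uniformly bounded on compact subsets of $\mathbb{R}^n\times\mathbb{R}^n\times\mathbb{R}$, i.e., for every compact $M\subseteq\mathbb{R}^n\times\mathbb{R}^n\times\mathbb{R}$ there exist $C_M>0$ and $\varepsilon_1\in(0,1]$ with $\sup_{M}|x_\varepsilon|\le C_M$ for all $\varepsilon\le\varepsilon_1$.
   Context: $g\in C^\infty(\mathbb{R}^n,\mathbb{R}^n)$, $h\in C^\infty(\mathbb{R},\mathbb{R}^n)$, and $(\delta_\varepsilon)_{\varepsilon\in(0,1]}$ is a net of smooth real functions on $\mathbb{R}$ with $\operatorname{supp}\delta_\varepsilon\subseteq[-\varepsilon,\varepsilon]$ and $\int|\delta_\varepsilon|\le C$ for some $C>0$ and all small $\varepsilon$. The problem $(\ast)$ is: $\ddot x_\varepsilon(t)=g(x_\varepsilon(t))\delta_\varepsilon(t)+h(t)$, $x_\varepsilon(-1)=x_0$, $\dot x_\varepsilon(-1)=\dot x_0$. An asymptotic solution of $(\ast)$ is a net $(x_\varepsilon)_\varepsilon\in C^\infty(\mathbb{R}^n\times\mathbb{R}^n\times\mathbb{R},\mathbb{R}^n)^{(0,1]}$ such that for every compact $K\subseteq\mathbb{R}^{2n}$ there is $\varepsilon_K\in(0,1]$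 with the property that for all $(x_0,\dot x_0)\in K$ and $\varepsilon\le\varepsilon_K$, $t\mapsto x_\varepsilon(x_0,\dot x_0,t)$ solves $(\ast)$ on all of $\mathbb{R}$. *)

theory Defs
  imports "HOL-Analysis.Analysis"
begin

text \<open>C^k via iterated (Frechet) directional derivatives; in finite dimensions this is the
usual notion of k-times continuously differentiable on the whole space.\<close>
fun Ck :: "nat \<Rightarrow> ('a::real_normed_vector \<Rightarrow> 'b::real_normed_vector) \<Rightarrow> bool" where
  "Ck 0 f = continuous_on UNIV f"
| "Ck (Suc k) f = ((\<forall>x. f differentiable (at x)) \<and>
      (\<forall>v. Ck k (\<lambda>x. frechet_derivative f (at x) v)))"

definition smooth :: "('a::real_normed_vector \<Rightarrow> 'b::real_normed_vector) \<Rightarrow> bool" where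
  "smooth f \<longleftrightarrow> (\<forall>k. Ck k f)"

definition solves_ivp ::
  "('v::real_normed_vector \<Rightarrow> 'v) \<Rightarrow> (real \<Rightarrow> 'v) \<Rightarrow> (real \<Rightarrow> real) \<Rightarrow> 'v \<Rightarrow> 'v \<Rightarrow> (real \<Rightarrow> 'v) \<Rightarrow> bool"
  where
  "solves_ivp g h \<delta> x0 x1 y \<longleftrightarrow>
     y (-1) = x0 \<and>
     (\<exists>y'. y' (-1) = x1 \<and>
        (\<forall>t. (y has_vector_derivative y' t) (at t)) \<and>
        (\<forall>t. (y' has_vector_derivative (\<delta> t *\<^sub>R g (y t) + h t)) (at t)))"

end

theory Submission
  imports Defs
begin

lemma L:
  fixes f f' :: "real \<Rightarrow> 'a::banach" and \<phi> :: "real \<Rightarrow> real"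
  assumes "a \<le> b" "\<And>t. (f has_vector_derivative f' t) (at t)"
    "\<And>t. t \<in> {a..b} \<Longrightarrow> norm (f' t) \<le> \<phi> t" "\<phi> integrable_on {a..b}"
  shows "norm (f b - f a) \<le> integral {a..b} \<phi>"
proof -
  have "(f' has_integral (f b - f a)) {a..b}"
    by (rule fundamental_theorem_of_calculus[OF assms(1)]) (auto intro: has_vector_derivative_at_within assms(2))
  then have "f' integrable_on {a..b}" "integral {a..b} f' = f b - f a" by (auto dest: integral_unique)
  then show ?thesis
    using Henstock_Kurzweil_Integration.integral_norm_bound_integral[of f' "{a..b}" \<phi>] assms(3,4) by auto
qed

lemma L_const:
  fixes f f' :: "real \<Rightarrow> 'a::banach"
  assumes "a \<le> b" "\<And>t. (f has_vector_derivative f' t) (at t)"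
    "\<And>t. t \<in> {a..b} \<Longrightarrow> norm (f' t) \<le> c"
  shows "norm (f b - f a) \<le> (b - a) * c"
proof -
  have i: "(\<lambda>_. c) integrable_on {a..b}" by (rule integrable_const_ivl)
  have "norm (f b - f a) \<le> integral {a..b} (\<lambda>_. c)" by (rule L[OF assms(1,2) assms(3) i])
  thus ?thesis using assms(1) by (simp add: mult.commute)
qed

lemma L_const2:
  fixes f f' :: "real \<Rightarrow> 'a::banach"
  assumes "\<And>t. (f has_vector_derivative f' t) (at t)"
    "\<And>t. t \<in> {min a b..max a b} \<Longrightarrow> norm (f' t) \<le> c"
  shows "norm (f b - f a) \<le> \<bar>b - a\<bar> * c"
proof (cases "a \<le> b")
  case True thus ?thesis using L_const[of a b f f' c] assms by auto
next
  case False
  then have "norm (f a - f b) \<le> (a - b) * c" using L_const[of b a f f' c] assms by auto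
  thus ?thesis using False by (simp add: norm_minus_commute)
qed

lemma L2:
  fixes f f' :: "real \<Rightarrow> 'a::banach" and \<phi> :: "real \<Rightarrow> real"
  assumes "\<And>t. (f has_vector_derivative f' t) (at t)"
    "\<And>t. t \<in> {min a b..max a b} \<Longrightarrow> norm (f' t) \<le> \<phi> t" "\<phi> integrable_on {min a b..max a b}"
  shows "norm (f b - f a) \<le> integral {min a b..max a b} \<phi>"
proof (cases "a \<le> b")
  case True thus ?thesis using L[of a b f f' \<phi>] assms by auto
next
  case False
  then have "norm (f a - f b) \<le> integral {b..a} \<phi>" using L[of b a f f' \<phi>] assms by auto
  thus ?thesis using False by (simp add: norm_minus_commute)
qed

lemma core:
  fixes g :: "'a::banach \<Rightarrow> 'a" and h y y' :: "real \<Rightarrow> 'a" and d :: "real \<Rightarrow> real"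
  assumes e: "0 < e" "e \<le> 1/2"
    and d_cont: "continuous_on UNIV d"
    and d_zero: "\<And>t. t \<notin> {-e..e} \<Longrightarrow> d t = 0"
    and d_int: "(\<lambda>t. \<bar>d t\<bar>) integrable_on UNIV" "integral UNIV (\<lambda>t. \<bar>d t\<bar>) \<le> C"
    and T: "1 \<le> T" and hb: "\<And>t. t \<in> {-T..T} \<Longrightarrow> norm (h t) \<le> H"
    and gb: "\<And>z. norm z \<le> P1 + 1 \<Longrightarrow> norm (g z) \<le> G" and G: "0 \<le> G"
    and P1: "P1 = R + (R + 2*T*H)"
    and V: "V = R + C*G + 2*T*H" and eV: "6*e*V \<le> 1"
    and y: "y (-1) = x0" "y' (-1) = x1" "\<And>t. (y has_vector_derivative y' t) (at t)"
       "\<And>t. (y' has_vector_derivative (d t *\<^sub>R g (y t) + h t)) (at t)"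
    and R: "norm x0 \<le> R" "norm x1 \<le> R"
  shows "t \<in> {-T..T} \<Longrightarrow> norm (y t) \<le> R + 2*T*V"
proof -
  have R0: "0 \<le> R" using R(1) norm_ge_zero[of x0] by linarith
  have C0: "0 \<le> C" using d_int Henstock_Kurzweil_Integration.integral_nonneg[of "\<lambda>t. \<bar>d t\<bar>" UNIV] by force
  have H0: "0 \<le> H" using hb[of 0] T norm_ge_zero[of "h 0"] by (smt (verit) atLeastAtMost_iff)
  have V0: "0 \<le> V" using V R0 C0 G H0 T by simp
  have dcI: "\<And>a b. (\<lambda>t. \<bar>d t\<bar>) integrable_on {a..b}"
    by (intro integrable_continuous_interval continuous_intros continuous_on_subset[OF d_cont]) auto
  have dI: "integral {a..b} (\<lambda>t. \<bar>d t\<bar>) \<le> C" for a b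
  proof -
    have "integral {a..b} (\<lambda>t. \<bar>d t\<bar>) \<le> integral UNIV (\<lambda>t. \<bar>d t\<bar>)"
      by (rule integral_subset_le[OF _ dcI d_int(1)]) auto
    thus ?thesis using d_int(2) by linarith
  qed
  have vel: "norm (y' u) \<le> R + C*Gb + 2*T*H"
    if u: "u \<in> {-T..T}" and Gb0: "0 \<le> Gb"
      and cond: "\<And>t. t \<in> {min (-1) u..max (-1) u} \<Longrightarrow> norm (d t *\<^sub>R g (y t)) \<le> \<bar>d t\<bar> * Gb"
    for u Gb
  proof -
    let ?I = "{min (-1) u..max (-1) u}"
    have sub: "?I \<subseteq> {-T..T}" using u T by auto
    have b: "norm (d t *\<^sub>R g (y t) + h t) \<le> \<bar>d t\<bar>*Gb + H" if "t \<in> ?I" for t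
    proof -
      have "norm (d t *\<^sub>R g (y t) + h t) \<le> norm (d t *\<^sub>R g (y t)) + norm (h t)" by (rule norm_triangle_ineq)
      thus ?thesis using cond[OF that] hb[of t] sub that by force
    qed
    have i1: "(\<lambda>t. \<bar>d t\<bar>*Gb) integrable_on ?I"
      using integrable_cmul[OF dcI, of Gb] by (simp add: mult.commute)
    have i2: "(\<lambda>t. H) integrable_on ?I" by (rule integrable_const_ivl)
    have int: "(\<lambda>t. \<bar>d t\<bar>*Gb + H) integrable_on ?I" by (rule integrable_add[OF i1 i2])
    have "norm (y' u - y' (-1)) \<le> integral ?I (\<lambda>t. \<bar>d t\<bar>*Gb + H)" by (rule L2[OF y(4) b int])
    also have "\<dots> = integral ?I (\<lambda>t. \<bar>d t\<bar>)*Gb + (max (-1) u - min (-1) u)*H"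
    proof -
      have e1: "integral ?I (\<lambda>t. \<bar>d t\<bar>*Gb + H) = integral ?I (\<lambda>t. \<bar>d t\<bar>*Gb) + integral ?I (\<lambda>t. H)"
        by (rule integral_add[OF i1 i2])
      have e2: "integral ?I (\<lambda>t. \<bar>d t\<bar>*Gb) = integral ?I (\<lambda>t. \<bar>d t\<bar>)*Gb"
        by (rule Henstock_Kurzweil_Integration.integral_mult_left)
      have e3: "integral ?I (\<lambda>t. H) = (max (-1) u - min (-1) u)*H" by simp
      show ?thesis using e1 e2 e3 by simp
    qed
    also have "\<dots> \<le> C*Gb + 2*T*H"
    proof -
      have "integral ?I (\<lambda>t. \<bar>d t\<bar>)*Gb \<le> C*Gb" by (rule mult_right_mono[OF dI Gb0])
      moreover have "(max (-1) u - min (-1) u)*H \<le> (2*T)*H" 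
        by (rule mult_right_mono[OF _ H0]) (use u T in auto)
      ultimately show ?thesis by simp
    qed
    finally have "norm (y' u - x1) \<le> C*Gb + 2*T*H" using y(2) by simp
    moreover have "norm (y' u) \<le> norm (y' u - x1) + norm x1" using norm_triangle_sub[of "y' u" x1] by simp
    ultimately show ?thesis using R(2) by simp
  qed
  have dz: "\<And>t. t < -e \<Longrightarrow> d t = 0" using d_zero by auto
  have P1b: "norm (y (-2*e)) \<le> P1"
  proof -
    have vb: "norm (y' u) \<le> R + 2*T*H" if "u \<in> {-1..-2*e}" for u
      using vel[of u 0] that T e dz by auto
    have "norm (y (-2*e) - y (-1)) \<le> (-2*e - (-1)) * (R + 2*T*H)"
      by (rule L_const[OF _ y(3) vb]) (use e in auto)
    also have "\<dots> \<le> R + 2*T*H" using e R0 H0 T by (simp add: mult_left_le_one_le)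
    finally show ?thesis using y(1) R(1) P1 norm_triangle_sub[of "y (-2*e)" x0] by simp
  qed
  have ycont: "continuous_on UNIV y"
    by (rule continuous_on_vector_derivative) (use y(3) has_vector_derivative_at_within in blast)
  have boot: "\<forall>s\<in>{-2*e..e}. norm (y s) < P1 + 1"
  proof (rule ccontr)
    assume neg: "\<not> ?thesis"
    define Z where "Z = {s\<in>{-2*e..e}. P1+1 \<le> norm (y s)}"
    have Zne: "Z \<noteq> {}" using neg by (auto simp: Z_def not_less)
    have "closed {s. P1+1 \<le> norm (y s)}"
      by (rule closed_Collect_le) (auto intro: continuous_intros ycont)
    moreover have "Z = {-2*e..e} \<inter> {s. P1+1 \<le> norm (y s)}" by (auto simp: Z_def)
    ultimately have clZ: "closed Z" by (simp add: closed_Int)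
    have bdd: "bdd_below Z" by (auto simp: Z_def bdd_below_def)
    define s0 where "s0 = Inf Z"
    have s0Z: "s0 \<in> Z" unfolding s0_def by (rule closed_contains_Inf[OF Zne bdd clZ])
    have low: "\<And>u. u \<in> Z \<Longrightarrow> s0 \<le> u" unfolding s0_def using bdd by (rule cInf_lower[rotated])
    have s0gt: "-2*e < s0"
    proof -
      have "-2*e \<le> s0" using s0Z by (simp add: Z_def)
      moreover have "s0 \<noteq> -2*e" using s0Z P1b by (auto simp: Z_def)
      ultimately show ?thesis by simp
    qed
    have s0le: "s0 \<le> e" using s0Z by (simp add: Z_def)
    have below: "norm (y u) < P1+1" if "u \<in> {-2*e..<s0}" for u
    proof (rule ccontr)
      assume "\<not> ?thesis"
      then have "u \<in> Z" using that s0le by (auto simp: Z_def)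
      then show False using low[of u] that by auto
    qed
    have vb: "norm (y' u) \<le> V" if u: "u \<in> {-2*e..<s0}" for u
    proof -
      have c: "norm (d t *\<^sub>R g (y t)) \<le> \<bar>d t\<bar> * G" if t: "t \<in> {min (-1) u..max (-1) u}" for t
      proof (cases "t < -2*e")
        case True then show ?thesis using dz[of t] e by simp
      next
        case False
        then have "t \<in> {-2*e..<s0}" using t u e by auto
        then have "norm (g (y t)) \<le> G" using below gb by force
        then show ?thesis by (simp add: mult_left_mono)
      qed
      have "u \<in> {-T..T}" using u e T s0le by auto
      then show ?thesis using vel[OF _ G c] V by simp
    qed
    have pb: "norm (y u) \<le> P1 + 1/2" if u: "u \<in> {-2*e..<s0}" for u
    proof -
      have "norm (y u - y (-2*e)) \<le> (u - (-2*e)) * V"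
        by (rule L_const[OF _ y(3)]) (use u vb in auto)
      also have "\<dots> \<le> (3*e) * V" by (rule mult_right_mono[OF _ V0]) (use u s0le in auto)
      also have "\<dots> \<le> 1/2" using eV by simp
      finally show ?thesis using P1b norm_triangle_sub[of "y u" "y (-2*e)"] by simp
    qed
    have "closed {u. norm (y u) \<le> P1 + 1/2}"
      by (rule closed_Collect_le) (auto intro: continuous_intros ycont)
    moreover have "{-2*e..<s0} \<subseteq> {u. norm (y u) \<le> P1 + 1/2}" using pb by auto
    ultimately have "closure {-2*e..<s0} \<subseteq> {u. norm (y u) \<le> P1 + 1/2}" by (rule closure_minimal[rotated])
    then have "{-2*e..s0} \<subseteq> {u. norm (y u) \<le> P1 + 1/2}" using closure_atLeastLessThan[OF s0gt] by simp
    moreover have "s0 \<in> {-2*e..s0}" using s0gt by simp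
    ultimately have "norm (y s0) \<le> P1 + 1/2" by blast
    then show False using s0Z by (simp add: Z_def)
  qed
  assume t: "t \<in> {-T..T}"
  have vb: "norm (y' u) \<le> V" if u: "u \<in> {min (-1) t..max (-1) t}" for u
  proof -
    have uT: "u \<in> {-T..T}" using u t T by auto
    have c: "norm (d \<tau> *\<^sub>R g (y \<tau>)) \<le> \<bar>d \<tau>\<bar> * G" for \<tau>
    proof (cases "d \<tau> = 0")
      case True then show ?thesis by simp
    next
      case False
      then have "\<tau> \<in> {-e..e}" using d_zero[of \<tau>] by blast
      then have "\<tau> \<in> {-2*e..e}" using e by auto
      then have "norm (g (y \<tau>)) \<le> G" using boot gb by force
      then show ?thesis by (simp add: mult_left_mono)
    qed
    show ?thesis using vel[OF uT G c] V by simp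
  qed
  have "norm (y t - y (-1)) \<le> \<bar>t - (-1)\<bar> * V" by (rule L_const2[OF y(3) vb])
  also have "\<dots> \<le> (2*T) * V" by (rule mult_right_mono[OF _ V0]) (use t T in auto)
  finally show ?thesis using y(1) R(1) norm_triangle_sub[of "y t" x0] by simp
qed

lemma smooth_cont: "smooth f \<Longrightarrow> continuous_on UNIV f"
  by (metis smooth_def Ck.simps(1))

theorem proposition4p3:
  fixes g :: "real^'n \<Rightarrow> real^'n"
    and h :: "real \<Rightarrow> real^'n"
    and \<delta> :: "real \<Rightarrow> real \<Rightarrow> real"
    and x :: "real \<Rightarrow> ((real^'n) \<times> (real^'n) \<times> real) \<Rightarrow> real^'n"
  assumes g_smooth: "smooth g"
    and h_smooth: "smooth h"
    and \<delta>_smooth: "\<forall>e\<in>{0<..1}. smooth (\<delta> e)"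
    and \<delta>_supp: "\<forall>e\<in>{0<..1}. closure {t. \<delta> e t \<noteq> 0} \<subseteq> {-e..e}"
    and \<delta>_L1: "\<exists>C>0. \<exists>e0\<in>{0<..1}. \<forall>e\<in>{0<..e0}. integral UNIV (\<lambda>t. \<bar>\<delta> e t\<bar>) \<le> C"
    and x_smooth: "\<forall>e\<in>{0<..1}. smooth (x e)"
    and x_asol: "\<forall>K :: ((real^'n) \<times> (real^'n)) set. compact K \<longrightarrow>
        (\<exists>eK\<in>{0<..1}. \<forall>(x0, x1)\<in>K. \<forall>e\<in>{0<..eK}.
            solves_ivp g h (\<delta> e) x0 x1 (\<lambda>t. x e (x0, x1, t)))"
  shows "\<forall>M :: ((real^'n) \<times> (real^'n) \<times> real) set. compact M \<longrightarrow>
      (\<exists>CM>0. \<exists>e1\<in>{0<..1}. \<forall>e\<in>{0<..e1}. \<forall>p\<in>M. norm (x e p) \<le> CM)"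
proof (intro allI impI)
  fix M :: "((real^'n) \<times> (real^'n) \<times> real) set"
  assume cM: "compact M"
  define K where "K = (\<lambda>p. (fst p, fst (snd p))) ` M"
  have cK: "compact K" unfolding K_def by (intro compact_continuous_image continuous_intros cM)
  obtain eK where eK: "eK \<in> {0<..1}" "\<forall>(x0, x1)\<in>K. \<forall>e\<in>{0<..eK}.
            solves_ivp g h (\<delta> e) x0 x1 (\<lambda>t. x e (x0, x1, t))" using x_asol cK by blast
  obtain C e0 where C: "C > 0" "e0 \<in> {0<..1}" "\<forall>e\<in>{0<..e0}. integral UNIV (\<lambda>t. \<bar>\<delta> e t\<bar>) \<le> C"
    using \<delta>_L1 by blast
  obtain B where B: "B > 0" "\<forall>p\<in>M. norm p \<le> B" using compact_imp_bounded[OF cM] bounded_pos by blast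
  define R where "R = B"
  define T where "T = B + 1"
  have T1: "1 \<le> T" using B by (simp add: T_def)
  have hcont: "continuous_on UNIV h" by (rule smooth_cont[OF h_smooth])
  have gcont: "continuous_on UNIV g" by (rule smooth_cont[OF g_smooth])
  have "compact (h ` {-T..T})" by (intro compact_continuous_image continuous_on_subset[OF hcont]) auto
  then obtain H where H: "H > 0" "\<forall>v\<in>h ` {-T..T}. norm v \<le> H" using compact_imp_bounded bounded_pos by blast
  define P1 where "P1 = R + (R + 2*T*H)"
  have "compact (g ` cball 0 (P1+1))" by (intro compact_continuous_image continuous_on_subset[OF gcont]) auto
  then obtain G where G: "G > 0" "\<forall>v\<in>g ` cball 0 (P1+1). norm v \<le> G" using compact_imp_bounded bounded_pos by blast
  define V where "V = R + C*G + 2*T*H"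
  have V0: "0 < V" unfolding V_def R_def using B C G H T1 by (simp add: add_pos_nonneg)
  define e1 where "e1 = min (min eK e0) (min (1/2) (1/(6*V)))"
  have e1pos: "0 < e1" using eK C V0 by (simp add: e1_def)
  have e11: "e1 \<le> 1" using eK by (simp add: e1_def)
  show "\<exists>CM>0. \<exists>e1\<in>{0<..1}. \<forall>e\<in>{0<..e1}. \<forall>p\<in>M. norm (x e p) \<le> CM"
  proof (intro exI[of _ "R + 2*T*V + 1"] conjI bexI[of _ e1] ballI)
    show "0 < R + 2*T*V + 1"
    proof -
      have "0 \<le> T*V" using V0 T1 by simp
      thus ?thesis using B by (simp add: R_def)
    qed
    show "e1 \<in> {0<..1}" using e1pos e11 by simp
    fix e p assume e: "e \<in> {0<..e1}" and p: "p \<in> M"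
    obtain x0 x1 t where pe: "p = (x0, x1, t)" by (cases p) auto
    have eI: "e \<in> {0<..1}" using e e11 by auto
    have "(x0, x1) \<in> K" unfolding K_def using p pe by force
    moreover have "e \<in> {0<..eK}" using e by (auto simp: e1_def)
    ultimately have sol: "solves_ivp g h (\<delta> e) x0 x1 (\<lambda>t. x e (x0, x1, t))" using eK(2) by blast
    then obtain y' where y': "y' (-1) = x1" "\<forall>t. ((\<lambda>t. x e (x0, x1, t)) has_vector_derivative y' t) (at t)"
        "\<forall>t. (y' has_vector_derivative (\<delta> e t *\<^sub>R g (x e (x0, x1, t)) + h t)) (at t)"
      and y0: "x e (x0, x1, -1) = x0"
      unfolding solves_ivp_def by blast
    have np: "norm p \<le> B" using B p by blast
    have n1: "norm x0 \<le> norm p" "norm (x1, t) \<le> norm p"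
      using norm_fst_le[of x0 "(x1,t)"] norm_snd_le[of "(x1,t)" x0] by (simp_all add: pe)
    have n2: "norm x1 \<le> norm (x1, t)" "norm t \<le> norm (x1, t)"
      using norm_fst_le[of x1 t] norm_snd_le[of t x1] by simp_all
    have nx0: "norm x0 \<le> R" using np n1 by (simp add: R_def)
    have nx1: "norm x1 \<le> R" using np n1 n2 by (simp add: R_def)
    have "\<bar>t\<bar> \<le> B" using np n1 n2 by simp
    then have nt: "t \<in> {-T..T}" by (auto simp: T_def)
    have dcont: "continuous_on UNIV (\<delta> e)" using \<delta>_smooth eI smooth_cont by blast
    have dzero: "\<delta> e s = 0" if "s \<notin> {-e..e}" for s
      using \<delta>_supp eI closure_subset[of "{t. \<delta> e t \<noteq> 0}"] that by blast
    have dint: "(\<lambda>t. \<bar>\<delta> e t\<bar>) integrable_on UNIV"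
      by (rule integrable_on_superset[of _ "{-e..e}"])
         (auto intro!: integrable_continuous_interval continuous_intros continuous_on_subset[OF dcont] simp: dzero)
    have dle: "integral UNIV (\<lambda>t. \<bar>\<delta> e t\<bar>) \<le> C" using C(3) e by (auto simp: e1_def)
    have e12: "e \<le> 1/2" using e by (auto simp: e1_def)
    have "e \<le> 1/(6*V)" using e by (auto simp: e1_def)
    then have eV: "6*e*V \<le> 1" using V0 by (simp add: field_simps)
    have "norm (x e (x0, x1, t)) \<le> R + 2*T*V"
    proof (rule core[where d = "\<delta> e" and y = "\<lambda>t. x e (x0, x1, t)" and y' = y' and g = g and h = h])
      show "0 < e" using e by simp
      show "e \<le> 1/2" by (rule e12)
      show "continuous_on UNIV (\<delta> e)" by (rule dcont)
      show "\<And>t. t \<notin> {-e..e} \<Longrightarrow> \<delta> e t = 0" by (rule dzero)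
      show "(\<lambda>t. \<bar>\<delta> e t\<bar>) integrable_on UNIV" by (rule dint)
      show "integral UNIV (\<lambda>t. \<bar>\<delta> e t\<bar>) \<le> C" by (rule dle)
      show "1 \<le> T" by (rule T1)
      show "\<And>t. t \<in> {-T..T} \<Longrightarrow> norm (h t) \<le> H" using H by blast
      show "\<And>z. norm z \<le> P1 + 1 \<Longrightarrow> norm (g z) \<le> G" using G by auto
      show "0 \<le> G" using G by simp
      show "P1 = R + (R + 2*T*H)" by (rule P1_def)
      show "V = R + C*G + 2*T*H" by (rule V_def)
      show "6*e*V \<le> 1" by (rule eV)
      show "x e (x0, x1, -1) = x0" by (rule y0)
      show "y' (-1) = x1" by (rule y'(1))
      show "\<And>t. ((\<lambda>t. x e (x0, x1, t)) has_vector_derivative y' t) (at t)" using y'(2) by blast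
      show "\<And>t. (y' has_vector_derivative (\<delta> e t *\<^sub>R g (x e (x0, x1, t)) + h t)) (at t)" using y'(3) by blast
      show "norm x0 \<le> R" by (rule nx0)
      show "norm x1 \<le> R" by (rule nx1)
      show "t \<in> {-T..T}" by (rule nt)
    qed
    then show "norm (x e p) \<le> R + 2*T*V + 1" by (simp add: pe)
  qed
qed

end
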